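(* Let $w\ge 5$ and let $C_1$ be the set of vertices $x=(x_1,\dots,x_{2w})$ of the Johnson graph $J(2w,w)$ such that $(x_1,x_2,x_3,x_4,x_5)\in B$, where $B=\{(0,0,0,0,0),(0,0,1,0,0),(0,0,0,1,0),(0,0,0,0,1),(1,0,1,0,0),(0,1,0,1,0),(0,0,1,0,1),(0,0,0,1,1),(1,1,1,1,1),(1,1,0,1,1),(1,1,1,0,1),(1,1,1,1,0),(0,1,0,1,1),(1,0,1,0,1),(1,1,0,1,0),(1,1,1,0,0)\}$, and let $C_2$ be the complement of $C_1$. Then $(C_1,C_2)$ is an equitable partition with quotient matrix $\begin{pmatrix} w^2-2w & 2w\\ 2w-2 & w^2-2w+2\end{pmatrix}$.
   Context: The Johnson graph $J(n,w)$ has as vertices the binary vectors of length $n$ with exactly $w$ ones; two vertices are adjacent iff they have exactly $w-1$ common ones. A partition $(C_1,C_2)$ of the vertex set is equitable with quotient matrix $S=(s_{ij})$ if every vertex of $C_i$ has exactly $s_{ij}$ neighbours in $C_j$. *)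

theory Defs
  imports Main
begin

text \<open>Vertices of the Johnson graph J(n,w): binary vectors (lists over {0,1})
  of length n with exactly w ones. Coordinates x_1..x_n are list positions 0..n-1.\<close>
definition johnson_vertices :: "nat \<Rightarrow> nat \<Rightarrow> nat list set" where
  "johnson_vertices n w = {x. length x = n \<and> set x \<subseteq> {0,1} \<and> card {i. i < n \<and> x ! i = 1} = w}"

definition johnson_adj :: "nat \<Rightarrow> nat list \<Rightarrow> nat list \<Rightarrow> bool" where
  "johnson_adj w x y \<longleftrightarrow> card {i. i < length x \<and> x ! i = 1 \<and> y ! i = 1} = w - 1"

definition equitable_partition2 ::
  "'a set \<Rightarrow> ('a \<Rightarrow> 'a \<Rightarrow> bool) \<Rightarrow> 'a set \<Rightarrow> 'a set \<Rightarrow> (nat \<Rightarrow> nat \<Rightarrow> nat) \<Rightarrow> bool" where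
  "equitable_partition2 V adj C1 C2 S \<longleftrightarrow>
     C1 \<union> C2 = V \<and> C1 \<inter> C2 = {} \<and>
     (\<forall>i\<in>{1,2}. \<forall>j\<in>{1,2}. \<forall>x\<in>(if i = 1 then C1 else C2).
        card {y \<in> (if j = 1 then C1 else C2). adj x y} = S i j)"

definition B_set :: "nat list set" where
  "B_set = {[0,0,0,0,0],[0,0,1,0,0],[0,0,0,1,0],[0,0,0,0,1],[1,0,1,0,0],[0,1,0,1,0],
            [0,0,1,0,1],[0,0,0,1,1],[1,1,1,1,1],[1,1,0,1,1],[1,1,1,0,1],[1,1,1,1,0],
            [0,1,0,1,1],[1,0,1,0,1],[1,1,0,1,0],[1,1,1,0,0]}"

end

theory Submission
  imports Defs
begin


definition c1 :: "(nat list \<Rightarrow> bool) \<Rightarrow> nat list \<Rightarrow> nat" where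
 "c1 R p = length (filter (\<lambda>(i,j). p!i=1 \<and> p!j=0 \<and> R (p[i:=0,j:=1])) (List.product [0..<5] [0..<5]))"
definition c2 :: "(nat list \<Rightarrow> bool) \<Rightarrow> nat list \<Rightarrow> nat" where
 "c2 R p = length (filter (\<lambda>i. p!i=1 \<and> R (p[i:=0])) [0..<5])"
definition c3 :: "(nat list \<Rightarrow> bool) \<Rightarrow> nat list \<Rightarrow> nat" where
 "c3 R p = length (filter (\<lambda>j. p!j=0 \<and> R (p[j:=1])) [0..<5])"
definition kk :: "nat list \<Rightarrow> nat" where
 "kk p = length (filter (\<lambda>i. p!i=1) [0..<5])"

lemma upt5: "[0..<5] = [0,1,2,3,4::nat]" by (simp add: upt_rec)

lemma tab0[simp]:
  "c1 (\<lambda>q. q\<in>B_set) [0,0,0,0,0] = 0"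
  "c2 (\<lambda>q. q\<in>B_set) [0,0,0,0,0] = 0"
  "c3 (\<lambda>q. q\<in>B_set) [0,0,0,0,0] = 3"
  "c1 (\<lambda>q. q\<notin>B_set) [0,0,0,0,0] = 0"
  "c2 (\<lambda>q. q\<notin>B_set) [0,0,0,0,0] = 0"
  "c3 (\<lambda>q. q\<notin>B_set) [0,0,0,0,0] = 2"
  "kk [0,0,0,0,0] = 0"
  by (simp_all add: c1_def c2_def c3_def kk_def upt5 B_set_def)

lemma tab1[simp]:
  "c1 (\<lambda>q. q\<in>B_set) [0,0,0,0,1] = 2"
  "c2 (\<lambda>q. q\<in>B_set) [0,0,0,0,1] = 1"
  "c3 (\<lambda>q. q\<in>B_set) [0,0,0,0,1] = 2"
  "c1 (\<lambda>q. q\<notin>B_set) [0,0,0,0,1] = 2"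
  "c2 (\<lambda>q. q\<notin>B_set) [0,0,0,0,1] = 0"
  "c3 (\<lambda>q. q\<notin>B_set) [0,0,0,0,1] = 2"
  "kk [0,0,0,0,1] = 1"
  by (simp_all add: c1_def c2_def c3_def kk_def upt5 B_set_def)

lemma tab2[simp]:
  "c1 (\<lambda>q. q\<in>B_set) [0,0,0,1,0] = 2"
  "c2 (\<lambda>q. q\<in>B_set) [0,0,0,1,0] = 1"
  "c3 (\<lambda>q. q\<in>B_set) [0,0,0,1,0] = 2"
  "c1 (\<lambda>q. q\<notin>B_set) [0,0,0,1,0] = 2"
  "c2 (\<lambda>q. q\<notin>B_set) [0,0,0,1,0] = 0"
  "c3 (\<lambda>q. q\<notin>B_set) [0,0,0,1,0] = 2"
  "kk [0,0,0,1,0] = 1"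
  by (simp_all add: c1_def c2_def c3_def kk_def upt5 B_set_def)

lemma tab3[simp]:
  "c1 (\<lambda>q. q\<in>B_set) [0,0,0,1,1] = 2"
  "c2 (\<lambda>q. q\<in>B_set) [0,0,0,1,1] = 2"
  "c3 (\<lambda>q. q\<in>B_set) [0,0,0,1,1] = 1"
  "c1 (\<lambda>q. q\<notin>B_set) [0,0,0,1,1] = 4"
  "c2 (\<lambda>q. q\<notin>B_set) [0,0,0,1,1] = 0"
  "c3 (\<lambda>q. q\<notin>B_set) [0,0,0,1,1] = 2"
  "kk [0,0,0,1,1] = 2"
  by (simp_all add: c1_def c2_def c3_def kk_def upt5 B_set_def)

lemma tab4[simp]:
  "c1 (\<lambda>q. q\<in>B_set) [0,0,1,0,0] = 2"
  "c2 (\<lambda>q. q\<in>B_set) [0,0,1,0,0] = 1"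
  "c3 (\<lambda>q. q\<in>B_set) [0,0,1,0,0] = 2"
  "c1 (\<lambda>q. q\<notin>B_set) [0,0,1,0,0] = 2"
  "c2 (\<lambda>q. q\<notin>B_set) [0,0,1,0,0] = 0"
  "c3 (\<lambda>q. q\<notin>B_set) [0,0,1,0,0] = 2"
  "kk [0,0,1,0,0] = 1"
  by (simp_all add: c1_def c2_def c3_def kk_def upt5 B_set_def)

lemma tab5[simp]:
  "c1 (\<lambda>q. q\<in>B_set) [0,0,1,0,1] = 2"
  "c2 (\<lambda>q. q\<in>B_set) [0,0,1,0,1] = 2"
  "c3 (\<lambda>q. q\<in>B_set) [0,0,1,0,1] = 1"
  "c1 (\<lambda>q. q\<notin>B_set) [0,0,1,0,1] = 4"
  "c2 (\<lambda>q. q\<notin>B_set) [0,0,1,0,1] = 0"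
  "c3 (\<lambda>q. q\<notin>B_set) [0,0,1,0,1] = 2"
  "kk [0,0,1,0,1] = 2"
  by (simp_all add: c1_def c2_def c3_def kk_def upt5 B_set_def)

lemma tab6[simp]:
  "c1 (\<lambda>q. q\<in>B_set) [0,0,1,1,0] = 4"
  "c2 (\<lambda>q. q\<in>B_set) [0,0,1,1,0] = 2"
  "c3 (\<lambda>q. q\<in>B_set) [0,0,1,1,0] = 0"
  "c1 (\<lambda>q. q\<notin>B_set) [0,0,1,1,0] = 2"
  "c2 (\<lambda>q. q\<notin>B_set) [0,0,1,1,0] = 0"
  "c3 (\<lambda>q. q\<notin>B_set) [0,0,1,1,0] = 3"
  "kk [0,0,1,1,0] = 2"
  by (simp_all add: c1_def c2_def c3_def kk_def upt5 B_set_def)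

lemma tab7[simp]:
  "c1 (\<lambda>q. q\<in>B_set) [0,0,1,1,1] = 2"
  "c2 (\<lambda>q. q\<in>B_set) [0,0,1,1,1] = 2"
  "c3 (\<lambda>q. q\<in>B_set) [0,0,1,1,1] = 0"
  "c1 (\<lambda>q. q\<notin>B_set) [0,0,1,1,1] = 4"
  "c2 (\<lambda>q. q\<notin>B_set) [0,0,1,1,1] = 1"
  "c3 (\<lambda>q. q\<notin>B_set) [0,0,1,1,1] = 2"
  "kk [0,0,1,1,1] = 3"
  by (simp_all add: c1_def c2_def c3_def kk_def upt5 B_set_def)

lemma tab8[simp]:
  "c1 (\<lambda>q. q\<in>B_set) [0,1,0,0,0] = 3"
  "c2 (\<lambda>q. q\<in>B_set) [0,1,0,0,0] = 1"
  "c3 (\<lambda>q. q\<in>B_set) [0,1,0,0,0] = 1"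
  "c1 (\<lambda>q. q\<notin>B_set) [0,1,0,0,0] = 1"
  "c2 (\<lambda>q. q\<notin>B_set) [0,1,0,0,0] = 0"
  "c3 (\<lambda>q. q\<notin>B_set) [0,1,0,0,0] = 3"
  "kk [0,1,0,0,0] = 1"
  by (simp_all add: c1_def c2_def c3_def kk_def upt5 B_set_def)

lemma tab9[simp]:
  "c1 (\<lambda>q. q\<in>B_set) [0,1,0,0,1] = 3"
  "c2 (\<lambda>q. q\<in>B_set) [0,1,0,0,1] = 1"
  "c3 (\<lambda>q. q\<in>B_set) [0,1,0,0,1] = 1"
  "c1 (\<lambda>q. q\<notin>B_set) [0,1,0,0,1] = 3"
  "c2 (\<lambda>q. q\<notin>B_set) [0,1,0,0,1] = 1"
  "c3 (\<lambda>q. q\<notin>B_set) [0,1,0,0,1] = 2"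
  "kk [0,1,0,0,1] = 2"
  by (simp_all add: c1_def c2_def c3_def kk_def upt5 B_set_def)

lemma tab10[simp]:
  "c1 (\<lambda>q. q\<in>B_set) [0,1,0,1,0] = 1"
  "c2 (\<lambda>q. q\<in>B_set) [0,1,0,1,0] = 1"
  "c3 (\<lambda>q. q\<in>B_set) [0,1,0,1,0] = 2"
  "c1 (\<lambda>q. q\<notin>B_set) [0,1,0,1,0] = 5"
  "c2 (\<lambda>q. q\<notin>B_set) [0,1,0,1,0] = 1"
  "c3 (\<lambda>q. q\<notin>B_set) [0,1,0,1,0] = 1"
  "kk [0,1,0,1,0] = 2"
  by (simp_all add: c1_def c2_def c3_def kk_def upt5 B_set_def)

lemma tab11[simp]:
  "c1 (\<lambda>q. q\<in>B_set) [0,1,0,1,1] = 1"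
  "c2 (\<lambda>q. q\<in>B_set) [0,1,0,1,1] = 2"
  "c3 (\<lambda>q. q\<in>B_set) [0,1,0,1,1] = 1"
  "c1 (\<lambda>q. q\<notin>B_set) [0,1,0,1,1] = 5"
  "c2 (\<lambda>q. q\<notin>B_set) [0,1,0,1,1] = 1"
  "c3 (\<lambda>q. q\<notin>B_set) [0,1,0,1,1] = 1"
  "kk [0,1,0,1,1] = 3"
  by (simp_all add: c1_def c2_def c3_def kk_def upt5 B_set_def)

lemma tab12[simp]:
  "c1 (\<lambda>q. q\<in>B_set) [0,1,1,0,0] = 3"
  "c2 (\<lambda>q. q\<in>B_set) [0,1,1,0,0] = 1"
  "c3 (\<lambda>q. q\<in>B_set) [0,1,1,0,0] = 1"
  "c1 (\<lambda>q. q\<notin>B_set) [0,1,1,0,0] = 3"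
  "c2 (\<lambda>q. q\<notin>B_set) [0,1,1,0,0] = 1"
  "c3 (\<lambda>q. q\<notin>B_set) [0,1,1,0,0] = 2"
  "kk [0,1,1,0,0] = 2"
  by (simp_all add: c1_def c2_def c3_def kk_def upt5 B_set_def)

lemma tab13[simp]:
  "c1 (\<lambda>q. q\<in>B_set) [0,1,1,0,1] = 3"
  "c2 (\<lambda>q. q\<in>B_set) [0,1,1,0,1] = 1"
  "c3 (\<lambda>q. q\<in>B_set) [0,1,1,0,1] = 1"
  "c1 (\<lambda>q. q\<notin>B_set) [0,1,1,0,1] = 3"
  "c2 (\<lambda>q. q\<notin>B_set) [0,1,1,0,1] = 2"
  "c3 (\<lambda>q. q\<notin>B_set) [0,1,1,0,1] = 1"
  "kk [0,1,1,0,1] = 3"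
  by (simp_all add: c1_def c2_def c3_def kk_def upt5 B_set_def)

lemma tab14[simp]:
  "c1 (\<lambda>q. q\<in>B_set) [0,1,1,1,0] = 3"
  "c2 (\<lambda>q. q\<in>B_set) [0,1,1,1,0] = 1"
  "c3 (\<lambda>q. q\<in>B_set) [0,1,1,1,0] = 1"
  "c1 (\<lambda>q. q\<notin>B_set) [0,1,1,1,0] = 3"
  "c2 (\<lambda>q. q\<notin>B_set) [0,1,1,1,0] = 2"
  "c3 (\<lambda>q. q\<notin>B_set) [0,1,1,1,0] = 1"
  "kk [0,1,1,1,0] = 3"
  by (simp_all add: c1_def c2_def c3_def kk_def upt5 B_set_def)

lemma tab15[simp]:
  "c1 (\<lambda>q. q\<in>B_set) [0,1,1,1,1] = 3"
  "c2 (\<lambda>q. q\<in>B_set) [0,1,1,1,1] = 1"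
  "c3 (\<lambda>q. q\<in>B_set) [0,1,1,1,1] = 1"
  "c1 (\<lambda>q. q\<notin>B_set) [0,1,1,1,1] = 1"
  "c2 (\<lambda>q. q\<notin>B_set) [0,1,1,1,1] = 3"
  "c3 (\<lambda>q. q\<notin>B_set) [0,1,1,1,1] = 0"
  "kk [0,1,1,1,1] = 4"
  by (simp_all add: c1_def c2_def c3_def kk_def upt5 B_set_def)

lemma tab16[simp]:
  "c1 (\<lambda>q. q\<in>B_set) [1,0,0,0,0] = 3"
  "c2 (\<lambda>q. q\<in>B_set) [1,0,0,0,0] = 1"
  "c3 (\<lambda>q. q\<in>B_set) [1,0,0,0,0] = 1"
  "c1 (\<lambda>q. q\<notin>B_set) [1,0,0,0,0] = 1"
  "c2 (\<lambda>q. q\<notin>B_set) [1,0,0,0,0] = 0"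
  "c3 (\<lambda>q. q\<notin>B_set) [1,0,0,0,0] = 3"
  "kk [1,0,0,0,0] = 1"
  by (simp_all add: c1_def c2_def c3_def kk_def upt5 B_set_def)

lemma tab17[simp]:
  "c1 (\<lambda>q. q\<in>B_set) [1,0,0,0,1] = 3"
  "c2 (\<lambda>q. q\<in>B_set) [1,0,0,0,1] = 1"
  "c3 (\<lambda>q. q\<in>B_set) [1,0,0,0,1] = 1"
  "c1 (\<lambda>q. q\<notin>B_set) [1,0,0,0,1] = 3"
  "c2 (\<lambda>q. q\<notin>B_set) [1,0,0,0,1] = 1"
  "c3 (\<lambda>q. q\<notin>B_set) [1,0,0,0,1] = 2"
  "kk [1,0,0,0,1] = 2"
  by (simp_all add: c1_def c2_def c3_def kk_def upt5 B_set_def)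

lemma tab18[simp]:
  "c1 (\<lambda>q. q\<in>B_set) [1,0,0,1,0] = 3"
  "c2 (\<lambda>q. q\<in>B_set) [1,0,0,1,0] = 1"
  "c3 (\<lambda>q. q\<in>B_set) [1,0,0,1,0] = 1"
  "c1 (\<lambda>q. q\<notin>B_set) [1,0,0,1,0] = 3"
  "c2 (\<lambda>q. q\<notin>B_set) [1,0,0,1,0] = 1"
  "c3 (\<lambda>q. q\<notin>B_set) [1,0,0,1,0] = 2"
  "kk [1,0,0,1,0] = 2"
  by (simp_all add: c1_def c2_def c3_def kk_def upt5 B_set_def)

lemma tab19[simp]:
  "c1 (\<lambda>q. q\<in>B_set) [1,0,0,1,1] = 3"
  "c2 (\<lambda>q. q\<in>B_set) [1,0,0,1,1] = 1"
  "c3 (\<lambda>q. q\<in>B_set) [1,0,0,1,1] = 1"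
  "c1 (\<lambda>q. q\<notin>B_set) [1,0,0,1,1] = 3"
  "c2 (\<lambda>q. q\<notin>B_set) [1,0,0,1,1] = 2"
  "c3 (\<lambda>q. q\<notin>B_set) [1,0,0,1,1] = 1"
  "kk [1,0,0,1,1] = 3"
  by (simp_all add: c1_def c2_def c3_def kk_def upt5 B_set_def)

lemma tab20[simp]:
  "c1 (\<lambda>q. q\<in>B_set) [1,0,1,0,0] = 1"
  "c2 (\<lambda>q. q\<in>B_set) [1,0,1,0,0] = 1"
  "c3 (\<lambda>q. q\<in>B_set) [1,0,1,0,0] = 2"
  "c1 (\<lambda>q. q\<notin>B_set) [1,0,1,0,0] = 5"
  "c2 (\<lambda>q. q\<notin>B_set) [1,0,1,0,0] = 1"
  "c3 (\<lambda>q. q\<notin>B_set) [1,0,1,0,0] = 1"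
  "kk [1,0,1,0,0] = 2"
  by (simp_all add: c1_def c2_def c3_def kk_def upt5 B_set_def)

lemma tab21[simp]:
  "c1 (\<lambda>q. q\<in>B_set) [1,0,1,0,1] = 1"
  "c2 (\<lambda>q. q\<in>B_set) [1,0,1,0,1] = 2"
  "c3 (\<lambda>q. q\<in>B_set) [1,0,1,0,1] = 1"
  "c1 (\<lambda>q. q\<notin>B_set) [1,0,1,0,1] = 5"
  "c2 (\<lambda>q. q\<notin>B_set) [1,0,1,0,1] = 1"
  "c3 (\<lambda>q. q\<notin>B_set) [1,0,1,0,1] = 1"
  "kk [1,0,1,0,1] = 3"
  by (simp_all add: c1_def c2_def c3_def kk_def upt5 B_set_def)

lemma tab22[simp]:
  "c1 (\<lambda>q. q\<in>B_set) [1,0,1,1,0] = 3"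
  "c2 (\<lambda>q. q\<in>B_set) [1,0,1,1,0] = 1"
  "c3 (\<lambda>q. q\<in>B_set) [1,0,1,1,0] = 1"
  "c1 (\<lambda>q. q\<notin>B_set) [1,0,1,1,0] = 3"
  "c2 (\<lambda>q. q\<notin>B_set) [1,0,1,1,0] = 2"
  "c3 (\<lambda>q. q\<notin>B_set) [1,0,1,1,0] = 1"
  "kk [1,0,1,1,0] = 3"
  by (simp_all add: c1_def c2_def c3_def kk_def upt5 B_set_def)

lemma tab23[simp]:
  "c1 (\<lambda>q. q\<in>B_set) [1,0,1,1,1] = 3"
  "c2 (\<lambda>q. q\<in>B_set) [1,0,1,1,1] = 1"
  "c3 (\<lambda>q. q\<in>B_set) [1,0,1,1,1] = 1"
  "c1 (\<lambda>q. q\<notin>B_set) [1,0,1,1,1] = 1"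
  "c2 (\<lambda>q. q\<notin>B_set) [1,0,1,1,1] = 3"
  "c3 (\<lambda>q. q\<notin>B_set) [1,0,1,1,1] = 0"
  "kk [1,0,1,1,1] = 4"
  by (simp_all add: c1_def c2_def c3_def kk_def upt5 B_set_def)

lemma tab24[simp]:
  "c1 (\<lambda>q. q\<in>B_set) [1,1,0,0,0] = 2"
  "c2 (\<lambda>q. q\<in>B_set) [1,1,0,0,0] = 0"
  "c3 (\<lambda>q. q\<in>B_set) [1,1,0,0,0] = 2"
  "c1 (\<lambda>q. q\<notin>B_set) [1,1,0,0,0] = 4"
  "c2 (\<lambda>q. q\<notin>B_set) [1,1,0,0,0] = 2"
  "c3 (\<lambda>q. q\<notin>B_set) [1,1,0,0,0] = 1"
  "kk [1,1,0,0,0] = 2"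
  by (simp_all add: c1_def c2_def c3_def kk_def upt5 B_set_def)

lemma tab25[simp]:
  "c1 (\<lambda>q. q\<in>B_set) [1,1,0,0,1] = 4"
  "c2 (\<lambda>q. q\<in>B_set) [1,1,0,0,1] = 0"
  "c3 (\<lambda>q. q\<in>B_set) [1,1,0,0,1] = 2"
  "c1 (\<lambda>q. q\<notin>B_set) [1,1,0,0,1] = 2"
  "c2 (\<lambda>q. q\<notin>B_set) [1,1,0,0,1] = 3"
  "c3 (\<lambda>q. q\<notin>B_set) [1,1,0,0,1] = 0"
  "kk [1,1,0,0,1] = 3"
  by (simp_all add: c1_def c2_def c3_def kk_def upt5 B_set_def)

lemma tab26[simp]:
  "c1 (\<lambda>q. q\<in>B_set) [1,1,0,1,0] = 2"
  "c2 (\<lambda>q. q\<in>B_set) [1,1,0,1,0] = 1"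
  "c3 (\<lambda>q. q\<in>B_set) [1,1,0,1,0] = 2"
  "c1 (\<lambda>q. q\<notin>B_set) [1,1,0,1,0] = 4"
  "c2 (\<lambda>q. q\<notin>B_set) [1,1,0,1,0] = 2"
  "c3 (\<lambda>q. q\<notin>B_set) [1,1,0,1,0] = 0"
  "kk [1,1,0,1,0] = 3"
  by (simp_all add: c1_def c2_def c3_def kk_def upt5 B_set_def)

lemma tab27[simp]:
  "c1 (\<lambda>q. q\<in>B_set) [1,1,0,1,1] = 2"
  "c2 (\<lambda>q. q\<in>B_set) [1,1,0,1,1] = 2"
  "c3 (\<lambda>q. q\<in>B_set) [1,1,0,1,1] = 1"
  "c1 (\<lambda>q. q\<notin>B_set) [1,1,0,1,1] = 2"
  "c2 (\<lambda>q. q\<notin>B_set) [1,1,0,1,1] = 2"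
  "c3 (\<lambda>q. q\<notin>B_set) [1,1,0,1,1] = 0"
  "kk [1,1,0,1,1] = 4"
  by (simp_all add: c1_def c2_def c3_def kk_def upt5 B_set_def)

lemma tab28[simp]:
  "c1 (\<lambda>q. q\<in>B_set) [1,1,1,0,0] = 2"
  "c2 (\<lambda>q. q\<in>B_set) [1,1,1,0,0] = 1"
  "c3 (\<lambda>q. q\<in>B_set) [1,1,1,0,0] = 2"
  "c1 (\<lambda>q. q\<notin>B_set) [1,1,1,0,0] = 4"
  "c2 (\<lambda>q. q\<notin>B_set) [1,1,1,0,0] = 2"
  "c3 (\<lambda>q. q\<notin>B_set) [1,1,1,0,0] = 0"
  "kk [1,1,1,0,0] = 3"
  by (simp_all add: c1_def c2_def c3_def kk_def upt5 B_set_def)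

lemma tab29[simp]:
  "c1 (\<lambda>q. q\<in>B_set) [1,1,1,0,1] = 2"
  "c2 (\<lambda>q. q\<in>B_set) [1,1,1,0,1] = 2"
  "c3 (\<lambda>q. q\<in>B_set) [1,1,1,0,1] = 1"
  "c1 (\<lambda>q. q\<notin>B_set) [1,1,1,0,1] = 2"
  "c2 (\<lambda>q. q\<notin>B_set) [1,1,1,0,1] = 2"
  "c3 (\<lambda>q. q\<notin>B_set) [1,1,1,0,1] = 0"
  "kk [1,1,1,0,1] = 4"
  by (simp_all add: c1_def c2_def c3_def kk_def upt5 B_set_def)

lemma tab30[simp]:
  "c1 (\<lambda>q. q\<in>B_set) [1,1,1,1,0] = 2"
  "c2 (\<lambda>q. q\<in>B_set) [1,1,1,1,0] = 2"
  "c3 (\<lambda>q. q\<in>B_set) [1,1,1,1,0] = 1"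
  "c1 (\<lambda>q. q\<notin>B_set) [1,1,1,1,0] = 2"
  "c2 (\<lambda>q. q\<notin>B_set) [1,1,1,1,0] = 2"
  "c3 (\<lambda>q. q\<notin>B_set) [1,1,1,1,0] = 0"
  "kk [1,1,1,1,0] = 4"
  by (simp_all add: c1_def c2_def c3_def kk_def upt5 B_set_def)

lemma tab31[simp]:
  "c1 (\<lambda>q. q\<in>B_set) [1,1,1,1,1] = 0"
  "c2 (\<lambda>q. q\<in>B_set) [1,1,1,1,1] = 3"
  "c3 (\<lambda>q. q\<in>B_set) [1,1,1,1,1] = 0"
  "c1 (\<lambda>q. q\<notin>B_set) [1,1,1,1,1] = 0"
  "c2 (\<lambda>q. q\<notin>B_set) [1,1,1,1,1] = 2"
  "c3 (\<lambda>q. q\<notin>B_set) [1,1,1,1,1] = 0"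
  "kk [1,1,1,1,1] = 5"
  by (simp_all add: c1_def c2_def c3_def kk_def upt5 B_set_def)


definition FQ :: "nat \<Rightarrow> nat list \<Rightarrow> bool" where
 "FQ v p \<longleftrightarrow> c1 (\<lambda>q. q\<in>B_set) p + c2 (\<lambda>q. q\<in>B_set) p * (v + kk p) + c3 (\<lambda>q. q\<in>B_set) p * (v+5-kk p)
         + (if p \<in> B_set then (v+5-kk p) * (v + kk p) else 0)
          = (if p\<in>B_set then v*v+8*v+15 else 2*v+8) \<and>
     c1 (\<lambda>q. q\<notin>B_set) p + c2 (\<lambda>q. q\<notin>B_set) p * (v + kk p) + c3 (\<lambda>q. q\<notin>B_set) p * (v+5-kk p)
         + (if p \<notin> B_set then (v+5-kk p) * (v + kk p) else 0)
          = (if p\<in>B_set then 2*v+10 else v*v+8*v+17)"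

lemma fin0: "FQ v [0,0,0,0,0]"
  unfolding FQ_def tab0 by (simp add: B_set_def algebra_simps)

lemma fin1: "FQ v [0,0,0,0,1]"
  unfolding FQ_def tab1 by (simp add: B_set_def algebra_simps)

lemma fin2: "FQ v [0,0,0,1,0]"
  unfolding FQ_def tab2 by (simp add: B_set_def algebra_simps)

lemma fin3: "FQ v [0,0,0,1,1]"
  unfolding FQ_def tab3 by (simp add: B_set_def algebra_simps)

lemma fin4: "FQ v [0,0,1,0,0]"
  unfolding FQ_def tab4 by (simp add: B_set_def algebra_simps)

lemma fin5: "FQ v [0,0,1,0,1]"
  unfolding FQ_def tab5 by (simp add: B_set_def algebra_simps)

lemma fin6: "FQ v [0,0,1,1,0]"
  unfolding FQ_def tab6 by (simp add: B_set_def algebra_simps)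

lemma fin7: "FQ v [0,0,1,1,1]"
  unfolding FQ_def tab7 by (simp add: B_set_def algebra_simps)

lemma fin8: "FQ v [0,1,0,0,0]"
  unfolding FQ_def tab8 by (simp add: B_set_def algebra_simps)

lemma fin9: "FQ v [0,1,0,0,1]"
  unfolding FQ_def tab9 by (simp add: B_set_def algebra_simps)

lemma fin10: "FQ v [0,1,0,1,0]"
  unfolding FQ_def tab10 by (simp add: B_set_def algebra_simps)

lemma fin11: "FQ v [0,1,0,1,1]"
  unfolding FQ_def tab11 by (simp add: B_set_def algebra_simps)

lemma fin12: "FQ v [0,1,1,0,0]"
  unfolding FQ_def tab12 by (simp add: B_set_def algebra_simps)

lemma fin13: "FQ v [0,1,1,0,1]"
  unfolding FQ_def tab13 by (simp add: B_set_def algebra_simps)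

lemma fin14: "FQ v [0,1,1,1,0]"
  unfolding FQ_def tab14 by (simp add: B_set_def algebra_simps)

lemma fin15: "FQ v [0,1,1,1,1]"
  unfolding FQ_def tab15 by (simp add: B_set_def algebra_simps)

lemma fin16: "FQ v [1,0,0,0,0]"
  unfolding FQ_def tab16 by (simp add: B_set_def algebra_simps)

lemma fin17: "FQ v [1,0,0,0,1]"
  unfolding FQ_def tab17 by (simp add: B_set_def algebra_simps)

lemma fin18: "FQ v [1,0,0,1,0]"
  unfolding FQ_def tab18 by (simp add: B_set_def algebra_simps)

lemma fin19: "FQ v [1,0,0,1,1]"
  unfolding FQ_def tab19 by (simp add: B_set_def algebra_simps)

lemma fin20: "FQ v [1,0,1,0,0]"
  unfolding FQ_def tab20 by (simp add: B_set_def algebra_simps)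

lemma fin21: "FQ v [1,0,1,0,1]"
  unfolding FQ_def tab21 by (simp add: B_set_def algebra_simps)

lemma fin22: "FQ v [1,0,1,1,0]"
  unfolding FQ_def tab22 by (simp add: B_set_def algebra_simps)

lemma fin23: "FQ v [1,0,1,1,1]"
  unfolding FQ_def tab23 by (simp add: B_set_def algebra_simps)

lemma fin24: "FQ v [1,1,0,0,0]"
  unfolding FQ_def tab24 by (simp add: B_set_def algebra_simps)

lemma fin25: "FQ v [1,1,0,0,1]"
  unfolding FQ_def tab25 by (simp add: B_set_def algebra_simps)

lemma fin26: "FQ v [1,1,0,1,0]"
  unfolding FQ_def tab26 by (simp add: B_set_def algebra_simps)

lemma fin27: "FQ v [1,1,0,1,1]"
  unfolding FQ_def tab27 by (simp add: B_set_def algebra_simps)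

lemma fin28: "FQ v [1,1,1,0,0]"
  unfolding FQ_def tab28 by (simp add: B_set_def algebra_simps)

lemma fin29: "FQ v [1,1,1,0,1]"
  unfolding FQ_def tab29 by (simp add: B_set_def algebra_simps)

lemma fin30: "FQ v [1,1,1,1,0]"
  unfolding FQ_def tab30 by (simp add: B_set_def algebra_simps)

lemma fin31: "FQ v [1,1,1,1,1]"
  unfolding FQ_def tab31 by (simp add: B_set_def algebra_simps)

lemma final_v:
  assumes "p \<in> set (List.n_lists 5 [0,1])"
  shows "FQ v p"
proof -
  have "p \<in> {[a,b,c,d,e] | a b c d e. a\<in>{0,1} \<and> b\<in>{0,1} \<and> c\<in>{0,1} \<and> d\<in>{0,1} \<and> e\<in>{0,1}}"
    using assms by (simp add: set_n_lists length_Suc_conv numeral_eq_Suc) blast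
  then obtain a b c d e where p: "p = [a,b,c,d,e]" and ab: "a\<in>{0,1}" "b\<in>{0,1}" "c\<in>{0,1}" "d\<in>{0,1}" "e\<in>{0,1}"
    by blast
  show ?thesis using ab unfolding p
    by (elim insertE emptyE) (simp_all only: fin0 fin1 fin2 fin3 fin4 fin5 fin6 fin7 fin8 fin9 fin10 fin11 fin12 fin13 fin14 fin15 fin16 fin17 fin18 fin19 fin20 fin21 fin22 fin23 fin24 fin25 fin26 fin27 fin28 fin29 fin30 fin31)
qed



lemma fin_bound: "finite {i::nat. i<n \<and> P i}"
  by (rule finite_subset[of _ "{..<n}"]) auto

lemma adj_char:
  assumes x: "x \<in> johnson_vertices n w" and w: "w \<ge> 1"
  shows "(y \<in> johnson_vertices n w \<and> johnson_adj w x y) \<longleftrightarrow>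
         (\<exists>i j. i<n \<and> j<n \<and> x!i=1 \<and> x!j=0 \<and> y = x[i:=0,j:=1])"
proof -
  from x have lx: "length x = n" and sx: "set x \<subseteq> {0,1}" and cx: "card {i. i<n \<and> x!i=1} = w"
    by (auto simp: johnson_vertices_def)
  have x01: "x!k = 0 \<or> x!k = 1" if "k<n" for k using sx lx nth_mem that by fastforce
  define S where "S = {i. i<n \<and> x!i=1}"
  have fS: "finite S" unfolding S_def by (rule fin_bound)
  show ?thesis
  proof
    assume L: "y \<in> johnson_vertices n w \<and> johnson_adj w x y"
    then have ly: "length y = n" and sy: "set y \<subseteq> {0,1}" and cy: "card {i. i<n \<and> y!i=1} = w"
      and ca0: "card {i. i < length x \<and> x!i=1 \<and> y!i=1} = w - 1"
      by (auto simp: johnson_vertices_def johnson_adj_def)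
    have y01: "y!k = 0 \<or> y!k = 1" if "k<n" for k using sy ly nth_mem that by fastforce
    define T where "T = {i. i<n \<and> y!i=1}"
    have fT: "finite T" unfolding T_def by (rule fin_bound)
    have "{i. i < length x \<and> x!i=1 \<and> y!i=1} = S \<inter> T" unfolding S_def T_def using lx by auto
    with ca0 have ca: "card (S \<inter> T) = w - 1" by simp
    have "card (S - T) = 1"
      using card_Diff_subset_Int[of S T] fS ca cx w unfolding S_def by auto
    then obtain i where i: "S - T = {i}" by (auto simp: card_Suc_eq)
    have "card (T - S) = 1"
      using card_Diff_subset_Int[of T S] fT ca cy w unfolding T_def by (auto simp: Int_commute)
    then obtain j where j: "T - S = {j}" by (auto simp: card_Suc_eq)
    have iS: "i \<in> S" "i \<notin> T" and jT: "j \<in> T" "j \<notin> S" using i j by auto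
    then have ij: "i<n" "j<n" "x!i = 1" "y!i \<noteq> 1" "y!j = 1" "x!j \<noteq> 1"
      unfolding S_def T_def by auto
    then have xj: "x!j = 0" and yi: "y!i = 0" using x01 y01 by auto
    have "y = x[i:=0,j:=1]"
    proof (rule nth_equalityI)
      show "length y = length (x[i:=0,j:=1])" using lx ly by simp
    next
      fix k assume "k < length y"
      then have k: "k<n" using ly by simp
      show "y!k = x[i:=0,j:=1]!k"
      proof (cases "k = j")
        case True then show ?thesis using ij lx by simp
      next
        case kj: False
        show ?thesis
        proof (cases "k = i")
          case True then show ?thesis using ij lx yi kj by simp
        next
          case False
          have "k \<notin> S - T" "k \<notin> T - S" using i j False kj by auto
          then have "x!k = 1 \<longleftrightarrow> y!k = 1" using k unfolding S_def T_def by auto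
          then have "y!k = x!k" using x01[OF k] y01[OF k] by auto
          then show ?thesis using False kj lx k by simp
        qed
      qed
    qed
    then show "\<exists>i j. i<n \<and> j<n \<and> x!i=1 \<and> x!j=0 \<and> y = x[i:=0,j:=1]"
      using ij xj by blast
  next
    assume "\<exists>i j. i<n \<and> j<n \<and> x!i=1 \<and> x!j=0 \<and> y = x[i:=0,j:=1]"
    then obtain i j where ij: "i<n" "j<n" "x!i=1" "x!j=0" and y: "y = x[i:=0,j:=1]" by blast
    have ne: "i \<noteq> j" using ij by auto
    have ly: "length y = n" using y lx by simp
    have "set y \<subseteq> insert 1 (set (x[i:=0]))" unfolding y by (rule set_update_subset_insert)
    also have "\<dots> \<subseteq> insert 1 (insert 0 (set x))" using set_update_subset_insert by fastforce
    finally have sy: "set y \<subseteq> {0,1}" using sx by auto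
    have T: "{k. k<n \<and> y!k=1} = insert j (S - {i})"
      unfolding S_def y using ij ne lx by (auto simp: nth_list_update)
    have iS: "i \<in> S" "j \<notin> S" unfolding S_def using ij by auto
    have "card (insert j (S - {i})) = w"
      using fS iS cx w unfolding S_def[symmetric] by (simp add: card_Diff_singleton)
    with T have cy: "card {k. k<n \<and> y!k=1} = w" by simp
    have "{k. k < length x \<and> x!k=1 \<and> y!k=1} = S - {i}"
      unfolding S_def y using ij ne lx by (auto simp: nth_list_update)
    then have "johnson_adj w x y"
      unfolding johnson_adj_def using fS iS cx unfolding S_def[symmetric] by (simp add: card_Diff_singleton)
    then show "y \<in> johnson_vertices n w \<and> johnson_adj w x y"
      using ly sy cy by (simp add: johnson_vertices_def)
  qed
qed

lemma nbr_card:
  assumes x: "x \<in> johnson_vertices n w" and w: "w \<ge> 1"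
  shows "card {y \<in> johnson_vertices n w. R (take 5 y) \<and> johnson_adj w x y} =
         card {(i,j). i<n \<and> j<n \<and> x!i=1 \<and> x!j=0 \<and> R (take 5 (x[i:=0,j:=1]))}"
    (is "card ?L = card ?P")
proof -
  have eq: "?L = (\<lambda>(i,j). x[i:=0,j:=1]) ` ?P"
  proof (rule set_eqI)
    fix y show "y \<in> ?L \<longleftrightarrow> y \<in> (\<lambda>(i,j). x[i:=0,j:=1]) ` ?P"
      using adj_char[OF x w, of y] by (auto simp: image_iff)
  qed
  from x have lx: "length x = n" by (simp add: johnson_vertices_def)
  have inj: "inj_on (\<lambda>(i,j). x[i:=0,j:=1]) ?P"
  proof (rule inj_onI, clarify)
    fix i j i' j'
    assume a: "i<n" "j<n" "x!i=1" "x!j=0" "i'<n" "j'<n" "x!i'=1" "x!j'=0"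
      and e: "x[i:=0,j:=1] = x[i':=0,j':=1]"
    have "x[i:=0,j:=1]!j = x[i':=0,j':=1]!j" using e by simp
    then have jj: "j = j'" using a lx by (auto simp: nth_list_update split: if_splits)
    have "x[i:=0,j:=1]!i = x[i':=0,j':=1]!i" using e by simp
    then have "i = i'" using a lx jj by (auto simp: nth_list_update split: if_splits)
    with jj show "i = i' \<and> j = j'" by simp
  qed
  show ?thesis unfolding eq using inj by (rule card_image)
qed



lemma split_card:
  assumes lx: "length x = n" and n5: "n \<ge> 5" and x01: "\<And>k. k<n \<Longrightarrow> x!k=0 \<or> x!k=1"
  shows "card {(i,j). i<n \<and> j<n \<and> x!i=1 \<and> x!j=0 \<and> R (take 5 (x[i:=0,j:=1]))} =
    c1 R (take 5 x) + c2 R (take 5 x) * card {j. 5\<le>j \<and> j<n \<and> x!j=0}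
    + c3 R (take 5 x) * card {i. 5\<le>i \<and> i<n \<and> x!i=1}
    + (if R (take 5 x) then card {i. 5\<le>i \<and> i<n \<and> x!i=1} * card {j. 5\<le>j \<and> j<n \<and> x!j=0} else 0)"
proof -
  define p where "p = take 5 x"
  define Os where "Os = {i. 5\<le>i \<and> i<n \<and> x!i=1}"
  define Z where "Z = {j. 5\<le>j \<and> j<n \<and> x!j=0}"
  have lp: "length p = 5" unfolding p_def using lx n5 by simp
  have xp: "x!i = p!i" if "i<5" for i unfolding p_def using that by simp
  have tk: "take 5 (x[i:=0,j:=1]) = p[i:=0,j:=1]" for i j
    unfolding p_def by (simp add: take_update_swap)
  have bey: "q[j:=v] = q" if "length q = 5" "5 \<le> j" for q :: "nat list" and j v
    using that by (simp add: list_update_beyond)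
  define P1 where "P1 = {(i,j). i<5 \<and> j<5 \<and> p!i=1 \<and> p!j=0 \<and> R (p[i:=0,j:=1])}"
  define A2 where "A2 = {i. i<5 \<and> p!i=1 \<and> R (p[i:=0])}"
  define A3 where "A3 = {j. j<5 \<and> p!j=0 \<and> R (p[j:=1])}"
  define P4 where "P4 = (if R p then Os \<times> Z else {})"
  have eq: "{(i,j). i<n \<and> j<n \<and> x!i=1 \<and> x!j=0 \<and> R (take 5 (x[i:=0,j:=1]))}
      = ((P1 \<union> A2 \<times> Z) \<union> Os \<times> A3) \<union> P4"
  proof (rule set_eqI, clarify)
    fix i j
    show "((i,j) \<in> {(i,j). i<n \<and> j<n \<and> x!i=1 \<and> x!j=0 \<and> R (take 5 (x[i:=0,j:=1]))}) =
          ((i,j) \<in> ((P1 \<union> A2 \<times> Z) \<union> Os \<times> A3) \<union> P4)"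
    proof (cases "i < 5")
      case True
      then show ?thesis
      proof (cases "j < 5")
        case True
        then show ?thesis using \<open>i<5\<close> n5 unfolding P1_def A2_def A3_def P4_def Os_def Z_def tk
          by (auto simp: xp bey)
      next
        case False
        then show ?thesis using \<open>i<5\<close> n5 lp unfolding P1_def A2_def A3_def P4_def Os_def Z_def tk
          by (auto simp: xp bey)
      qed
    next
      case False
      then show ?thesis
      proof (cases "j < 5")
        case True
        then show ?thesis using \<open>\<not> i<5\<close> n5 lp unfolding P1_def A2_def A3_def P4_def Os_def Z_def tk
          by (auto simp: xp bey)
      next
        case False
        then show ?thesis using \<open>\<not> i<5\<close> n5 lp unfolding P1_def A2_def A3_def P4_def Os_def Z_def tk
          by (auto simp: xp bey)
      qed
    qed
  qed
  have fO: "finite Os" and fZ: "finite Z" unfolding Os_def Z_def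
    by (rule finite_subset[of _ "{..<n}"], auto)+
  have fA2: "finite A2" and fA3: "finite A3" unfolding A2_def A3_def
    by (rule finite_subset[of _ "{..<5}"], auto)+
  have fP1: "finite P1" unfolding P1_def
    by (rule finite_subset[of _ "{..<5} \<times> {..<5}"]) auto
  have fP4: "finite P4" unfolding P4_def using fO fZ by simp
  have d1: "P1 \<inter> A2 \<times> Z = {}" unfolding P1_def A2_def Z_def by auto
  have d2: "(P1 \<union> A2 \<times> Z) \<inter> Os \<times> A3 = {}" unfolding P1_def A2_def Z_def Os_def A3_def by auto
  have d3: "((P1 \<union> A2 \<times> Z) \<union> Os \<times> A3) \<inter> P4 = {}"
    unfolding P1_def A2_def Z_def Os_def A3_def P4_def by auto
  have cP1: "card P1 = c1 R p"
  proof -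
    let ?f = "(\<lambda>(i,j). p!i=1 \<and> p!j=0 \<and> R (p[i:=0,j:=1]))"
    have "set (filter ?f (List.product [0..<5] [0..<5])) = P1" unfolding P1_def by auto
    moreover have "distinct (filter ?f (List.product [0..<5] [0..<5]))"
      by (simp add: distinct_product)
    ultimately show ?thesis unfolding c1_def using distinct_card[of "filter ?f (List.product [0..<5] [0..<5])"] by (simp only:)
  qed
  have cA2: "card A2 = c2 R p" unfolding c2_def A2_def length_filter_conv_card by (rule arg_cong[where f=card]) auto
  have cA3: "card A3 = c3 R p" unfolding c3_def A3_def length_filter_conv_card by (rule arg_cong[where f=card]) auto
  have fAZ: "finite (A2 \<times> Z)" and fOA: "finite (Os \<times> A3)" using fA2 fZ fO fA3 by auto
  have e1: "card (P1 \<union> A2 \<times> Z) = card P1 + card A2 * card Z"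
    using card_Un_disjoint[OF fP1 fAZ d1] card_cartesian_product[of A2 Z] by simp
  have e2: "card ((P1 \<union> A2 \<times> Z) \<union> Os \<times> A3) = card (P1 \<union> A2 \<times> Z) + card Os * card A3"
    using card_Un_disjoint[OF _ fOA d2] fP1 fAZ card_cartesian_product[of Os A3] by simp
  have e3: "card (((P1 \<union> A2 \<times> Z) \<union> Os \<times> A3) \<union> P4) = card ((P1 \<union> A2 \<times> Z) \<union> Os \<times> A3) + card P4"
    using card_Un_disjoint[OF _ fP4 d3] fP1 fAZ fOA by simp
  have "card (((P1 \<union> A2 \<times> Z) \<union> Os \<times> A3) \<union> P4) = card P1 + card A2 * card Z + card Os * card A3 + card P4"
    using e1 e2 e3 by simp
  then show ?thesis unfolding eq cP1 cA2 cA3 P4_def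
    by (simp add: p_def Os_def Z_def algebra_simps card_cartesian_product)
qed



lemma key:
  assumes w5: "w \<ge> 5" and x: "x \<in> johnson_vertices (2*w) w"
  shows "card {y \<in> johnson_vertices (2*w) w. take 5 y \<in> B_set \<and> johnson_adj w x y}
           = (if take 5 x \<in> B_set then w^2 - 2*w else 2*w - 2)"
    and "card {y \<in> johnson_vertices (2*w) w. take 5 y \<notin> B_set \<and> johnson_adj w x y}
           = (if take 5 x \<in> B_set then 2*w else w^2 - 2*w + 2)"
proof -
  obtain v where v: "w = v + 5" using w5 by (metis add.commute le_Suc_ex)
  define n where "n = 2*w"
  from x have lx: "length x = n" and sx: "set x \<subseteq> {0,1}" and cx: "card {i. i<n \<and> x!i=1} = w"
    by (auto simp: johnson_vertices_def n_def)
  have x01: "x!k = 0 \<or> x!k = 1" if "k<n" for k using sx lx nth_mem that by fastforce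
  have n5: "n \<ge> 5" using w5 n_def by simp
  define p where "p = take 5 x"
  define Os where "Os = {i. 5\<le>i \<and> i<n \<and> x!i=1}"
  define Z where "Z = {j. 5\<le>j \<and> j<n \<and> x!j=0}"
  have fO: "finite Os" and fZ: "finite Z" unfolding Os_def Z_def
    by (rule finite_subset[of _ "{..<n}"], auto)+
  have pl: "p \<in> set (List.n_lists 5 [0,1])"
    unfolding set_n_lists p_def using lx n5 sx set_take_subset[of 5 x] by auto
  have kp: "kk p = card {i. i<5 \<and> x!i=1}"
    unfolding kk_def length_filter_conv_card p_def by (rule arg_cong[where f=card]) auto
  have "{i. i<n \<and> x!i=1} = {i. i<5 \<and> x!i=1} \<union> Os" unfolding Os_def using n5 by auto
  moreover have "{i. i<5 \<and> x!i=1} \<inter> Os = {}" unfolding Os_def by auto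
  moreover have "finite {i. i<5 \<and> x!i=1}" by (rule fin_bound)
  ultimately have a1: "kk p + card Os = w" using cx kp fO by (simp add: card_Un_disjoint)
  have "{5..<n} = Os \<union> Z" unfolding Os_def Z_def using x01 by fastforce
  moreover have "Os \<inter> Z = {}" unfolding Os_def Z_def by auto
  ultimately have a2: "card Os + card Z = n - 5" using fO fZ by (metis card_Un_disjoint card_atLeastLessThan)
  have ca: "card Os = v + 5 - kk p" using a1 v by simp
  have cb: "card Z = v + kk p" using a1 a2 v n_def by simp
  have F: "FQ v p" using pl by (rule final_v)
  have w1: "w \<ge> 1" using w5 by simp
  have t1: "w^2 - 2*w = v*v+8*v+15" "2*w - 2 = 2*v+8" "2*w = 2*v+10" "w^2 - 2*w + 2 = v*v+8*v+17"
    unfolding v by (simp_all add: power2_eq_square algebra_simps)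
  have s1: "card {y \<in> johnson_vertices (2*w) w. take 5 y \<in> B_set \<and> johnson_adj w x y}
     = c1 (\<lambda>q. q \<in> B_set) p + c2 (\<lambda>q. q \<in> B_set) p * card Z + c3 (\<lambda>q. q \<in> B_set) p * card Os
       + (if p \<in> B_set then card Os * card Z else 0)"
    using nbr_card[OF x w1, of "\<lambda>q. q \<in> B_set"] split_card[OF lx n5 x01, of "\<lambda>q. q \<in> B_set"]
    unfolding p_def Os_def Z_def n_def by simp
  have s2: "card {y \<in> johnson_vertices (2*w) w. take 5 y \<notin> B_set \<and> johnson_adj w x y}
     = c1 (\<lambda>q. q \<notin> B_set) p + c2 (\<lambda>q. q \<notin> B_set) p * card Z + c3 (\<lambda>q. q \<notin> B_set) p * card Os
       + (if p \<notin> B_set then card Os * card Z else 0)"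
    using nbr_card[OF x w1, of "\<lambda>q. q \<notin> B_set"] split_card[OF lx n5 x01, of "\<lambda>q. q \<notin> B_set"]
    unfolding p_def Os_def Z_def n_def by simp
  have r1: "card {y \<in> johnson_vertices (2*w) w. take 5 y \<in> B_set \<and> johnson_adj w x y}
     = (if p\<in>B_set then v*v+8*v+15 else 2*v+8)"
    using F unfolding s1 FQ_def ca cb by (simp only: mult.commute)
  have r2: "card {y \<in> johnson_vertices (2*w) w. take 5 y \<notin> B_set \<and> johnson_adj w x y}
     = (if p\<in>B_set then 2*v+10 else v*v+8*v+17)"
    using F unfolding s2 FQ_def ca cb by (simp only: mult.commute)
  show "card {y \<in> johnson_vertices (2*w) w. take 5 y \<in> B_set \<and> johnson_adj w x y}
           = (if take 5 x \<in> B_set then w^2 - 2*w else 2*w - 2)"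
    unfolding r1 p_def using t1(1,2) by simp
  show "card {y \<in> johnson_vertices (2*w) w. take 5 y \<notin> B_set \<and> johnson_adj w x y}
           = (if take 5 x \<in> B_set then 2*w else w^2 - 2*w + 2)"
  proof -
    have "(if take 5 x \<in> B_set then 2*w else w^2 - 2*w + 2) = (if p\<in>B_set then 2*v+10 else v*v+8*v+17)"
      unfolding v p_def by (simp add: power2_eq_square algebra_simps)
    then show ?thesis unfolding r2 by simp
  qed
qed

theorem mainTheorem4:
  fixes w :: nat
  assumes "w \<ge> 5"
  defines "C1 \<equiv> {x \<in> johnson_vertices (2*w) w. take 5 x \<in> B_set}"
  defines "C2 \<equiv> johnson_vertices (2*w) w - C1"
  shows "equitable_partition2 (johnson_vertices (2*w) w) (johnson_adj w) C1 C2
           (\<lambda>i j. if i = 1 \<and> j = 1 then w^2 - 2*w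
                  else if i = 1 \<and> j = 2 then 2*w
                  else if i = 2 \<and> j = 1 then 2*w - 2
                  else w^2 - 2*w + 2)"
proof -
  have e1: "{y \<in> C1. johnson_adj w x y} = {y \<in> johnson_vertices (2*w) w. take 5 y \<in> B_set \<and> johnson_adj w x y}" for x
    unfolding C1_def by auto
  have e2: "{y \<in> C2. johnson_adj w x y} = {y \<in> johnson_vertices (2*w) w. take 5 y \<notin> B_set \<and> johnson_adj w x y}" for x
    unfolding C2_def C1_def by auto
  have x1: "x \<in> johnson_vertices (2*w) w \<and> take 5 x \<in> B_set" if "x \<in> C1" for x using that C1_def by auto
  have x2: "x \<in> johnson_vertices (2*w) w \<and> take 5 x \<notin> B_set" if "x \<in> C2" for x using that C1_def C2_def by auto
  show ?thesis unfolding equitable_partition2_def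
  proof (intro conjI ballI)
    show "C1 \<union> C2 = johnson_vertices (2*w) w" unfolding C1_def C2_def by auto
    show "C1 \<inter> C2 = {}" unfolding C1_def C2_def by auto
  next
    fix i j x
    assume i: "i \<in> {1::nat,2}" and j: "j \<in> {1::nat,2}" and xx: "x \<in> (if i = 1 then C1 else C2)"
    show "card {y \<in> (if j = 1 then C1 else C2). johnson_adj w x y} =
        (if i = 1 \<and> j = 1 then w^2 - 2*w
                  else if i = 1 \<and> j = 2 then 2*w
                  else if i = 2 \<and> j = 1 then 2*w - 2
                  else w^2 - 2*w + 2)"
      using i j xx x1 x2 key[OF assms(1)] e1 e2 by (auto split: if_splits)
  qed
qed


end
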